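(* Let $q=2^t$. The $\mathbb{F}_2$-span of $\{\chi_\ell:\ell\in X_0\}\cup Z$ equals the $\mathbb{F}_2$-span of $\{\chi_\ell:\ell\in X_0\cup L_1\}$.
   Context: Let $q$ be a prime power and $V$ a $4$-dimensional vector space over $\mathbb{F}_q$ with a nonsingular alternating bilinear form and symplectic basis $e_0,e_1,e_2,e_3$ with $(e_0,e_3)=(e_1,e_2)=1$. $P$ is the set of $1$-dimensional subspaces of $V$ (points), $L$ the set of totally isotropic $2$-dimensional subspaces (lines). $p_0=\langle e_0\rangle$, $\ell_0=\langle e_0,e_1\rangle$; $P_1$ is the set of points $(a:b:c:d)$ with $d\ne0$; $L_1$ is the set of lines sharing no point with $\ell_0$. $\mathbb{F}_2[P]$ is the space of functions $P\to\mathbb{F}_2$, $\chi_\ell$ the characteristic function of a line $\ell$; $C(P,L_1)$ is the span of $\{\chi_\ell:\ell\in L_1\}$ in $\mathbb{F}_2[P]$, $\pi_{P_1}:\mathbb{F}_2[P]\to\mathbb{F}_2[P_1]$ is restriction to $P_1$, and $C(P_1,L_1)=\pi_{P_1}(C(P,L_1))$. $X_0$ is the set of the $q$ lines through $p_0$ other than $\ell_0$. $Z\subset\{\chi_\ell:\ell\in L_1\}$ is any set of characteristic functions of lines of $L_1$ which $\pi_{P_1}$ maps bijectively onto a basis of $C(P_1,L_1)$. *)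

theory Defs
  imports "HOL-Analysis.Finite_Cartesian_Product" "HOL-Library.Z2"
begin

text \<open>V = F_q^4, coordinates indexed 0,1,2,3 (a:b:c:d).
  Alternating form with (e0,e3) = (e1,e2) = 1.\<close>

definition sform :: "'a::field ^ 4 \<Rightarrow> 'a ^ 4 \<Rightarrow> 'a" where
  "sform x y = x$0 * y$3 - x$3 * y$0 + x$1 * y$2 - x$2 * y$1"

definition ebasis :: "4 \<Rightarrow> 'a::field ^ 4" where
  "ebasis i = (\<chi> j. if j = i then 1 else 0)"

definition span1 :: "'a::field ^ 4 \<Rightarrow> ('a ^ 4) set" where
  "span1 v = {c *s v | c. True}"

definition span2 :: "'a::field ^ 4 \<Rightarrow> 'a ^ 4 \<Rightarrow> ('a ^ 4) set" where
  "span2 u v = {a *s u + b *s v | a b. True}"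

definition lin_indep2 :: "'a::field ^ 4 \<Rightarrow> 'a ^ 4 \<Rightarrow> bool" where
  "lin_indep2 u v \<longleftrightarrow> (\<forall>a b. a *s u + b *s v = 0 \<longrightarrow> a = 0 \<and> b = 0)"

definition points :: "('a::{field,finite} ^ 4) set set" where
  "points = {span1 v | v. v \<noteq> 0}"

definition lines :: "('a::{field,finite} ^ 4) set set" where
  "lines = {span2 u v | u v. lin_indep2 u v \<and> sform u v = 0}"

definition p0 :: "('a::{field,finite} ^ 4) set" where
  "p0 = span1 (ebasis 0)"

definition l0 :: "('a::{field,finite} ^ 4) set" where
  "l0 = span2 (ebasis 0) (ebasis 1)"

definition P1 :: "('a::{field,finite} ^ 4) set set" where
  "P1 = {span1 v | v. v $ 3 \<noteq> 0}"

definition L1 :: "('a::{field,finite} ^ 4) set set" where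
  "L1 = {l \<in> lines. \<not> (\<exists>p\<in>points. p \<subseteq> l \<and> p \<subseteq> l0)}"

definition X0 :: "('a::{field,finite} ^ 4) set set" where
  "X0 = {l \<in> lines. p0 \<subseteq> l \<and> l \<noteq> l0}"

text \<open>Elements of F_2[P] are functions P \<rightarrow> F_2, represented as functions on
  subsets of V vanishing outside P.\<close>
definition chi :: "('a::{field,finite} ^ 4) set \<Rightarrow> ('a ^ 4) set \<Rightarrow> bit" where
  "chi l = (\<lambda>p. if p \<in> points \<and> p \<subseteq> l then 1 else 0)"

definition piP1 :: "(('a::{field,finite} ^ 4) set \<Rightarrow> bit) \<Rightarrow> ('a ^ 4) set \<Rightarrow> bit" where
  "piP1 f = (\<lambda>p. if p \<in> P1 then f p else 0)"

definition F2span :: "('b \<Rightarrow> bit) set \<Rightarrow> ('b \<Rightarrow> bit) set" where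
  "F2span S = {f. \<exists>T c. finite T \<and> T \<subseteq> S \<and> f = (\<lambda>x. \<Sum>g\<in>T. c g * g x)}"

definition F2indep :: "('b \<Rightarrow> bit) set \<Rightarrow> bool" where
  "F2indep S \<longleftrightarrow> (\<forall>T c. finite T \<and> T \<subseteq> S \<and> (\<lambda>x. \<Sum>g\<in>T. c g * g x) = (\<lambda>x. 0)
      \<longrightarrow> (\<forall>g\<in>T. c g = 0))"

definition F2basis :: "('b \<Rightarrow> bit) set \<Rightarrow> ('b \<Rightarrow> bit) set \<Rightarrow> bool" where
  "F2basis B W \<longleftrightarrow> B \<subseteq> W \<and> F2indep B \<and> F2span B = W"

definition CP1L1 :: "(('a::{field,finite} ^ 4) set \<Rightarrow> bit) set" where
  "CP1L1 = piP1 ` F2span (chi ` L1)"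

end

theory Submission
  imports Defs
begin

declare add_bit_eq_xor [simp del] mult_bit_eq_and [simp del]

lemma bit_cases2: "(b::bit) = 0 \<or> b = 1" using bit_not_zero_iff by blast

lemma bit_add_self [simp]: "(b::bit) + b = 0"
  using bit_cases2[of b] by auto

lemma bit_add_eq0: "(a::bit) + b = 0 \<longleftrightarrow> a = b"
  using bit_cases2[of a] bit_cases2[of b] by auto

lemma bit_ind_self [simp]: "(if (b::bit) = 1 then 1 else 0) = b"
  using bit_cases2[of b] by auto

lemma exhaust4: "(i::4) = 0 \<or> i = 1 \<or> i = 2 \<or> i = 3"
proof (induct i)
  case (of_int z)
  then have "z = 0 \<or> z = 1 \<or> z = 2 \<or> z = 3" by fastforce
  then show ?case by auto
qed

lemma vec4_eq: "(x::'a^4) = y \<longleftrightarrow> x$0 = y$0 \<and> x$1 = y$1 \<and> x$2 = y$2 \<and> x$3 = y$3"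
proof
  assume "x$0 = y$0 \<and> x$1 = y$1 \<and> x$2 = y$2 \<and> x$3 = y$3"
  thus "x = y" unfolding vec_eq_iff using exhaust4 by metis
qed simp

definition v4 :: "'a \<Rightarrow> 'a \<Rightarrow> 'a \<Rightarrow> 'a \<Rightarrow> 'a^4" where
  "v4 a b c d = (\<chi> i. if i = 0 then a else if i = 1 then b else if i = 2 then c else d)"

lemma v4_comp [simp]: "v4 a b c d $ 0 = a" "v4 a b c d $ 1 = b" "v4 a b c d $ 2 = c" "v4 a b c d $ 3 = d"
  by (simp_all add: v4_def)

abbreviation ind :: "bool \<Rightarrow> bit" where "ind P \<equiv> (if P then 1 else 0)"

lemma sum_ind_unique:
  assumes "\<And>x. P x \<longleftrightarrow> x = g \<and> Q"
  shows "(\<Sum>x\<in>(UNIV::'b::finite set). ind (P x)) = ind Q"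
proof -
  have "(\<Sum>x\<in>(UNIV::'b set). ind (P x)) = (\<Sum>x\<in>UNIV. if x = g then ind Q else 0)"
    using assms by (intro sum.cong) auto
  also have "\<dots> = ind Q" by (simp add: sum.delta)
  finally show ?thesis .
qed

lemma span1_self: "w \<in> span1 w"
  unfolding span1_def by (rule CollectI, rule exI[of _ 1]) simp

lemma span2_mem: "a *s u + b *s v \<in> span2 u v"
  unfolding span2_def by blast

lemma span2_add:
  assumes "x \<in> span2 u v" "y \<in> span2 u v" shows "x + y \<in> span2 u v"
proof -
  from assms obtain a b c d where "x = a *s u + b *s v" "y = c *s u + d *s v" unfolding span2_def by blast
  hence "x + y = (a+c) *s u + (b+d) *s v" by (simp add: vec_eq_iff algebra_simps)
  thus ?thesis unfolding span2_def by blast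
qed

lemma span2_scale:
  assumes "x \<in> span2 u v" shows "c *s x \<in> span2 u v"
proof -
  from assms obtain a b where "x = a *s u + b *s v" unfolding span2_def by blast
  hence "c *s x = (c*a) *s u + (c*b) *s v" by (simp add: vec_eq_iff algebra_simps)
  thus ?thesis unfolding span2_def by blast
qed

lemma span1_sub_iff:
  assumes "\<And>x c. x \<in> S \<Longrightarrow> c *s x \<in> S"
  shows "span1 w \<subseteq> S \<longleftrightarrow> w \<in> S"
  using span1_self[of w] assms unfolding span1_def by blast

lemma lines_span2: "l \<in> lines \<Longrightarrow> \<exists>u v. l = span2 u v \<and> lin_indep2 u v \<and> sform u v = 0"
  unfolding lines_def by blast

lemma lines_closed: "l \<in> lines \<Longrightarrow> x \<in> l \<Longrightarrow> c *s x \<in> l"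
  using lines_span2 span2_scale by blast

lemma span1_points: "w \<noteq> 0 \<Longrightarrow> span1 w \<in> points"
  unfolding points_def by blast

lemma chi_span1:
  assumes "l \<in> lines" "w \<noteq> 0"
  shows "chi l (span1 w) = ind (w \<in> l)"
  using span1_sub_iff[of l w] lines_closed[OF assms(1)] span1_points[OF assms(2)]
  unfolding chi_def by auto

lemma chi_nonpoint: "p \<notin> points \<Longrightarrow> chi l p = 0"
  unfolding chi_def by simp

lemma span1_scale:
  assumes "c \<noteq> 0" shows "span1 (c *s w) = span1 w"
proof
  show "span1 (c *s w) \<subseteq> span1 w"
    unfolding span1_def by (auto simp: vector_smult_assoc)
  show "span1 w \<subseteq> span1 (c *s w)"
  proof
    fix x assume "x \<in> span1 w"
    then obtain d where "x = d *s w" unfolding span1_def by blast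
    hence "x = (d / c) *s (c *s w)" using assms by (simp add: vector_smult_assoc)
    thus "x \<in> span1 (c *s w)" unfolding span1_def by blast
  qed
qed

lemma ebasis0: "ebasis 0 = v4 1 0 0 0"
  by (simp add: vec4_eq ebasis_def)

lemma ebasis1: "ebasis 1 = v4 0 1 0 0"
  by (simp add: vec4_eq ebasis_def)

lemma l0_mem: "w \<in> l0 \<longleftrightarrow> w$2 = 0 \<and> w$3 = 0"
proof
  assume "w \<in> l0"
  then obtain a b where "w = a *s ebasis 0 + b *s ebasis 1" unfolding l0_def span2_def by blast
  thus "w$2 = 0 \<and> w$3 = 0" by (simp add: ebasis0 ebasis1)
next
  assume "w$2 = 0 \<and> w$3 = 0"
  hence "w = w$0 *s ebasis 0 + w$1 *s ebasis 1" by (simp add: ebasis0 ebasis1 vec4_eq)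
  thus "w \<in> l0" unfolding l0_def span2_def by blast
qed

lemma L1_noint:
  assumes "l \<in> L1" "w \<in> l" "w$2 = 0" "w$3 = 0"
  shows "w = 0"
proof (rule ccontr)
  assume w: "w \<noteq> 0"
  have l: "l \<in> lines" using assms(1) by (simp add: L1_def)
  have "span1 w \<subseteq> l" using span1_sub_iff[of l w] lines_closed[OF l] assms(2) by blast
  moreover have "span1 w \<subseteq> l0" using span1_sub_iff[of l0 w] assms(3,4) by (simp add: l0_mem)
  ultimately show False using assms(1) span1_points[OF w] unfolding L1_def by blast
qed

lemma sform_comb: "sform (a *s u + b *s v) (c *s u + d *s v) = (a*d - b*c) * sform u v"
  unfolding sform_def by simp algebra

definition inL :: "'a::field \<Rightarrow> 'a \<Rightarrow> 'a \<Rightarrow> 'a^4 \<Rightarrow> bool" where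
  "inL A B C w \<longleftrightarrow> w$0 = w$2*A + w$3*C \<and> w$1 = w$2*B + w$3*A"


lemma span2_sform0:
  assumes "x \<in> span2 u v" "y \<in> span2 u v" "sform u v = 0"
  shows "sform x y = 0"
proof -
  from assms obtain a b c d where "x = a *s u + b *s v" "y = c *s u + d *s v" unfolding span2_def by blast
  thus ?thesis using assms(3) by (simp add: sform_comb)
qed

lemma L1_coords:
  assumes "l \<in> L1"
  shows "\<exists>A B C. \<forall>w. w \<in> l \<longleftrightarrow> inL A B C w"
proof -
  have ll: "l \<in> lines" using assms by (simp add: L1_def)
  then obtain u v where uv: "l = span2 u v" "lin_indep2 u v" "sform u v = 0" using lines_span2 by blast
  have noint: "\<And>w. w \<in> l \<Longrightarrow> w$2 = 0 \<Longrightarrow> w$3 = 0 \<Longrightarrow> w = 0" using L1_noint assms by blast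
  have comb: "\<And>a b. a *s u + b *s v \<in> l" using uv(1) span2_mem by blast
  have ind: "\<And>a b. a *s u + b *s v = 0 \<Longrightarrow> a = 0 \<and> b = 0" using uv(2) unfolding lin_indep2_def by blast
  have cadd: "\<And>x y. x \<in> l \<Longrightarrow> y \<in> l \<Longrightarrow> x + y \<in> l" using uv(1) span2_add by blast
  have cscale: "\<And>x c. x \<in> l \<Longrightarrow> c *s x \<in> l" using uv(1) span2_scale by blast
  define D where "D = u$2 * v$3 - u$3 * v$2"
  have D: "D \<noteq> 0"
  proof
    assume D0: "D = 0"
    have "v$3 *s u + (- u$3) *s v = 0"
      by (rule noint[OF comb]) (use D0 in \<open>simp_all add: D_def algebra_simps\<close>)
    hence 3: "v$3 = 0 \<and> u$3 = 0" using ind by fastforce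
    have "(- v$2) *s u + u$2 *s v = 0"
      by (rule noint[OF comb]) (use 3 in \<open>simp_all add: algebra_simps\<close>)
    hence 2: "v$2 = 0 \<and> u$2 = 0" using ind by fastforce
    have "1 *s u + 0 *s v = 0"
      by (rule noint[OF comb]) (use 2 3 in simp_all)
    hence "(1::'a) = 0" using ind by blast
    thus False by simp
  qed
  define r1 where "r1 = (v$3/D) *s u + (- u$3/D) *s v"
  define r2 where "r2 = (- v$2/D) *s u + (u$2/D) *s v"
  have r12: "r1$2 = (u$2 * v$3 - u$3 * v$2) / D" unfolding r1_def using D by (simp add: field_simps)
  have r13: "r1$3 = 0" unfolding r1_def using D by (simp add: field_simps)
  have r22: "r2$2 = 0" unfolding r2_def using D by (simp add: field_simps)
  have r23: "r2$3 = (u$2 * v$3 - u$3 * v$2) / D" unfolding r2_def using D by (simp add: field_simps)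
  have r1: "r1 \<in> l" "r1$2 = 1" "r1$3 = 0"
    using comb D r12 r13 unfolding r1_def D_def by auto
  have r2: "r2 \<in> l" "r2$2 = 0" "r2$3 = 1"
    using comb D r22 r23 unfolding r2_def D_def by auto
  have "sform r1 r2 = 0" using span2_sform0 r1(1) r2(1) uv by blast
  hence A: "r2$1 = r1$0" using r1 r2 by (simp add: sform_def)
  show ?thesis
  proof (intro exI allI)
    fix w
    show "w \<in> l \<longleftrightarrow> inL (r1$0) (r1$1) (r2$0) w"
    proof
      assume w: "w \<in> l"
      have "w + (-w$2) *s r1 + (-w$3) *s r2 \<in> l" using cadd cscale w r1(1) r2(1) by blast
      hence "w + (-w$2) *s r1 + (-w$3) *s r2 = 0" by (rule noint) (simp_all add: r1 r2)
      then show "inL (r1$0) (r1$1) (r2$0) w" using A unfolding inL_def vec4_eq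
        by (simp add: r1 r2 algebra_simps)
    next
      assume eq: "inL (r1$0) (r1$1) (r2$0) w"
      have "w = w$2 *s r1 + w$3 *s r2" using eq r1 r2 A unfolding inL_def by (simp add: vec4_eq)
      moreover have "w$2 *s r1 + w$3 *s r2 \<in> l" using cadd cscale r1(1) r2(1) by blast
      ultimately show "w \<in> l" by simp
    qed
  qed
qed

lemma chi_L1:
  assumes "l \<in> L1"
  shows "\<exists>A B C. \<forall>w. w \<noteq> 0 \<longrightarrow> chi l (span1 w) = ind (inL A B C w)"
proof -
  obtain A B C where "\<forall>w. w \<in> l \<longleftrightarrow> inL A B C w" using L1_coords[OF assms] by blast
  moreover have "l \<in> lines" using assms by (simp add: L1_def)
  ultimately show ?thesis using chi_span1 by metis
qed

definition mline :: "'a::{field,finite} \<Rightarrow> ('a^4) set" where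
  "mline b = span2 (v4 1 0 0 0) (v4 0 b 1 0)"

lemma mline_mem: "w \<in> mline b \<longleftrightarrow> w$3 = 0 \<and> w$1 = b * w$2"
proof
  assume "w \<in> mline b"
  then obtain a c where "w = a *s v4 1 0 0 0 + c *s v4 0 b 1 0" unfolding mline_def span2_def by blast
  thus "w$3 = 0 \<and> w$1 = b * w$2" by (simp add: mult.commute)
next
  assume "w$3 = 0 \<and> w$1 = b * w$2"
  hence "w = w$0 *s v4 1 0 0 0 + w$2 *s v4 0 b 1 0" by (simp add: vec4_eq mult.commute)
  thus "w \<in> mline b" unfolding mline_def span2_def by blast
qed

lemma mline_lines: "mline b \<in> lines"
proof -
  have "lin_indep2 (v4 1 0 0 0) (v4 0 b 1 0)"
    unfolding lin_indep2_def
  proof (intro allI impI)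
    fix a c :: 'a assume "a *s v4 1 0 0 0 + c *s v4 0 b 1 0 = 0"
    hence "(a *s v4 1 0 0 0 + c *s v4 0 b 1 0)$0 = 0" "(a *s v4 1 0 0 0 + c *s v4 0 b 1 0)$2 = 0" by simp_all
    thus "a = 0 \<and> c = 0" by simp
  qed
  moreover have "sform (v4 1 0 0 0) (v4 0 b 1 0) = 0" by (simp add: sform_def)
  ultimately show ?thesis unfolding lines_def mline_def by blast
qed

lemma mline_X0: "mline b \<in> X0"
proof -
  have cl: "\<And>x c. x \<in> mline b \<Longrightarrow> c *s x \<in> mline b" unfolding mline_def using span2_scale by blast
  have "p0 \<subseteq> mline b" unfolding p0_def ebasis0 using span1_sub_iff[OF cl] by (simp add: mline_mem)
  moreover have "mline b \<noteq> l0"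
  proof
    assume "mline b = l0"
    moreover have "v4 0 b 1 0 \<in> mline b" by (simp add: mline_mem)
    ultimately show False by (simp add: l0_mem)
  qed
  ultimately show ?thesis using mline_lines unfolding X0_def by blast
qed

lemma chi_mline: "w \<noteq> 0 \<Longrightarrow> chi (mline b) (span1 w) = ind (w$3 = 0 \<and> w$1 = b * w$2)"
  by (subst mline_mem[symmetric]) (rule chi_span1[OF mline_lines])


lemma F2spanI: "finite T \<Longrightarrow> T \<subseteq> A \<Longrightarrow> f = (\<lambda>x. \<Sum>g\<in>T. c g * g x) \<Longrightarrow> f \<in> F2span A"
  unfolding F2span_def by blast

lemma F2span_mono: "A \<subseteq> B \<Longrightarrow> F2span A \<subseteq> F2span B"
  unfolding F2span_def by blast

lemma F2span_base: "g \<in> A \<Longrightarrow> g \<in> F2span A"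
  unfolding F2span_def
  by (rule CollectI, rule exI[of _ "{g}"], rule exI[of _ "\<lambda>_. 1"]) simp

lemma F2span_zero: "(\<lambda>x. 0) \<in> F2span A"
  unfolding F2span_def
  by (rule CollectI, rule exI[of _ "{}"], rule exI[of _ "\<lambda>_. 1"]) simp

lemma F2span_scale: "f \<in> F2span A \<Longrightarrow> (\<lambda>x. c * f x) \<in> F2span A"
proof -
  assume "f \<in> F2span A"
  then obtain T d where T: "finite T" "T \<subseteq> A" "f = (\<lambda>x. \<Sum>g\<in>T. d g * g x)" unfolding F2span_def by blast
  hence "(\<lambda>x. c * f x) = (\<lambda>x. \<Sum>g\<in>T. (c * d g) * g x)" by (simp add: sum_distrib_left mult.assoc)
  thus ?thesis using T by (intro F2spanI[where c="\<lambda>g. c * d g"]) auto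
qed

lemma sum_restrict_bit:
  assumes "finite U" "T \<subseteq> U"
  shows "(\<Sum>g\<in>T. d g * g x) = (\<Sum>g\<in>U. (if g \<in> T then d g else 0) * (g x :: bit))"
proof -
  have "(\<Sum>g\<in>U. (if g \<in> T then d g else 0) * g x) = (\<Sum>g\<in>U. if g \<in> T then d g * g x else 0)"
    by (intro sum.cong) auto
  also have "\<dots> = (\<Sum>g\<in>U \<inter> T. d g * g x)" by (simp add: sum.inter_restrict assms)
  also have "U \<inter> T = T" using assms by blast
  finally show ?thesis by simp
qed

lemma F2span_add: "f1 \<in> F2span A \<Longrightarrow> f2 \<in> F2span A \<Longrightarrow> (\<lambda>x. f1 x + f2 x) \<in> F2span A"
proof -
  assume "f1 \<in> F2span A" "f2 \<in> F2span A"
  then obtain T1 d1 T2 d2 where T: "finite T1" "T1 \<subseteq> A" "f1 = (\<lambda>x. \<Sum>g\<in>T1. d1 g * g x)"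
    "finite T2" "T2 \<subseteq> A" "f2 = (\<lambda>x. \<Sum>g\<in>T2. d2 g * g x)" unfolding F2span_def by blast
  define d where "d g = (if g \<in> T1 then d1 g else 0) + (if g \<in> T2 then d2 g else 0)" for g
  have "(\<lambda>x. f1 x + f2 x) = (\<lambda>x. \<Sum>g\<in>T1 \<union> T2. d g * g x)"
  proof
    fix x
    have "f1 x = (\<Sum>g\<in>T1 \<union> T2. (if g \<in> T1 then d1 g else 0) * g x)"
      using T sum_restrict_bit[of "T1 \<union> T2" T1] by simp
    moreover have "f2 x = (\<Sum>g\<in>T1 \<union> T2. (if g \<in> T2 then d2 g else 0) * g x)"
      using T sum_restrict_bit[of "T1 \<union> T2" T2] by simp
    ultimately have "f1 x + f2 x = (\<Sum>g\<in>T1 \<union> T2. (if g \<in> T1 then d1 g else 0) * g x + (if g \<in> T2 then d2 g else 0) * g x)"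
      by (simp only: sum.distrib)
    also have "\<dots> = (\<Sum>g\<in>T1 \<union> T2. d g * g x)"
      unfolding d_def by (simp only: distrib_right)
    finally show "f1 x + f2 x = (\<Sum>g\<in>T1 \<union> T2. d g * g x)" .
  qed
  thus ?thesis using T by (intro F2spanI[where c=d and T="T1 \<union> T2"]) auto
qed

lemma F2span_sum:
  assumes "finite I" "\<And>i. i \<in> I \<Longrightarrow> h i \<in> F2span A"
  shows "(\<lambda>x. \<Sum>i\<in>I. h i x) \<in> F2span A"
  using assms
proof (induction I rule: finite_induct)
  case empty
  then show ?case using F2span_zero by simp
next
  case (insert i I)
  then show ?case using F2span_add[of "h i" A "\<lambda>x. \<Sum>i\<in>I. h i x"] by simp
qed

lemma F2span_subspan:
  assumes "G \<subseteq> F2span H" shows "F2span G \<subseteq> F2span H"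
proof
  fix f assume "f \<in> F2span G"
  then obtain T c where T: "finite T" "T \<subseteq> G" "f = (\<lambda>x. \<Sum>g\<in>T. c g * g x)" unfolding F2span_def by blast
  have "\<And>g. g \<in> T \<Longrightarrow> (\<lambda>x. c g * g x) \<in> F2span H"
  proof -
    fix g assume "g \<in> T"
    hence "g \<in> F2span H" using T(2) assms by (meson subsetD)
    thus "(\<lambda>x. c g * g x) \<in> F2span H" by (rule F2span_scale)
  qed
  hence "(\<lambda>x. \<Sum>g\<in>T. c g * g x) \<in> F2span H"
    using F2span_sum[OF T(1), of "\<lambda>g x. c g * g x"] by simp
  thus "f \<in> F2span H" using T by simp
qed

lemma F2span_functional:
  assumes "f \<in> F2span G" "\<And>g. g \<in> G \<Longrightarrow> L g = 0"
    "\<And>T c. finite T \<Longrightarrow> L (\<lambda>x. \<Sum>g\<in>T. c g * g x) = (\<Sum>g\<in>T. c g * L g)"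
  shows "L f = 0"
proof -
  obtain T c where T: "finite T" "T \<subseteq> G" "f = (\<lambda>x. \<Sum>g\<in>T. c g * g x)" using assms(1) unfolding F2span_def by blast
  have "L f = (\<Sum>g\<in>T. c g * L g)" using T assms(3) by simp
  also have "\<dots> = (\<Sum>g\<in>T. c g * 0)" using T(2) assms(2) by (intro sum.cong) auto
  also have "\<dots> = 0" by simp
  finally show ?thesis .
qed

lemma sum_lin:
  "(\<Sum>i\<in>I. (\<Sum>g\<in>T. c g * g (\<phi> i))) = (\<Sum>g\<in>T. c g * (\<Sum>i\<in>I. (g (\<phi> i) :: bit)))"
  unfolding sum_distrib_left by (rule sum.swap)


lemma inL_v4: "inL A B C (v4 x y z t) \<longleftrightarrow> x = z*A + t*C \<and> y = z*B + t*A"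
  by (simp add: inL_def)

lemma bit_4: "ind P + ind Q + ind P + ind Q = 0"
  by (cases P; cases Q) simp_all

lemma key_arith:
  fixes A B C b0 lam :: "'a::{field,finite}"
  assumes lam: "lam \<noteq> 0"
  shows "(\<Sum>\<gamma>\<in>UNIV. ind (inL A B C (v4 (\<gamma>*lam) (\<gamma>*b0) \<gamma> 1)))
       + (\<Sum>\<gamma>\<in>UNIV. ind (inL A B C (v4 0 (lam + \<gamma>*b0) \<gamma> 1)))
       + ind (inL A B C (v4 0 b0 1 0)) + ind (inL A B C (v4 lam b0 1 0)) = 0"
proof (cases "B = b0")
  case True
  have s1: "(\<Sum>\<gamma>\<in>UNIV. ind (inL A B C (v4 (\<gamma>*lam) (\<gamma>*b0) \<gamma> 1))) = ind (A = 0)"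
  proof (rule sum_ind_unique)
    fix \<gamma>
    show "inL A B C (v4 (\<gamma>*lam) (\<gamma>*b0) \<gamma> 1) \<longleftrightarrow> \<gamma> = C/lam \<and> A = 0"
      using True lam by (auto simp: inL_v4 field_simps)
  qed
  have s2: "(\<Sum>\<gamma>\<in>UNIV. ind (inL A B C (v4 0 (lam + \<gamma>*b0) \<gamma> 1))) = ind (A = lam)"
  proof (rule sum_ind_unique)
    fix \<gamma>
    show "inL A B C (v4 0 (lam + \<gamma>*b0) \<gamma> 1) \<longleftrightarrow> \<gamma> = - C/lam \<and> A = lam"
      using True lam by (auto simp: inL_v4 field_simps eq_neg_iff_add_eq_0 add.commute)
  qed
  have x: "inL A B C (v4 0 b0 1 0) \<longleftrightarrow> A = 0" using True by (auto simp: inL_v4)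
  have y: "inL A B C (v4 lam b0 1 0) \<longleftrightarrow> A = lam" using True by (auto simp: inL_v4)
  show ?thesis unfolding s1 s2 x y by (rule bit_4)
next
  case False
  define d where "d = b0 - B"
  have d: "d \<noteq> 0" using False unfolding d_def by simp
  define Q where "Q = (C = A * (lam - A) / d)"
  have s1: "(\<Sum>\<gamma>\<in>UNIV. ind (inL A B C (v4 (\<gamma>*lam) (\<gamma>*b0) \<gamma> 1))) = ind Q"
  proof (rule sum_ind_unique)
    fix \<gamma>
    have e: "\<gamma>*b0 = \<gamma>*B + A \<longleftrightarrow> \<gamma> = A/d" using d unfolding d_def by (auto simp: field_simps)
    have "inL A B C (v4 (\<gamma>*lam) (\<gamma>*b0) \<gamma> 1) \<longleftrightarrow> (\<gamma> = A/d \<and> \<gamma>*lam = \<gamma>*A + C)"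
      using e by (auto simp: inL_v4)
    also have "\<dots> \<longleftrightarrow> \<gamma> = A/d \<and> Q"
    proof (cases "\<gamma> = A/d")
      case True
      have "\<gamma>*lam = \<gamma>*A + C \<longleftrightarrow> C = \<gamma>*(lam - A)" by (auto simp: algebra_simps)
      moreover have "\<gamma>*(lam - A) = A*(lam-A)/d" using True by simp
      ultimately show ?thesis unfolding Q_def using True by simp
    qed simp
    finally show "inL A B C (v4 (\<gamma>*lam) (\<gamma>*b0) \<gamma> 1) \<longleftrightarrow> \<gamma> = A/d \<and> Q" .
  qed
  have s2: "(\<Sum>\<gamma>\<in>UNIV. ind (inL A B C (v4 0 (lam + \<gamma>*b0) \<gamma> 1))) = ind Q"
  proof (rule sum_ind_unique)
    fix \<gamma>
    have e: "lam + \<gamma>*b0 = \<gamma>*B + A \<longleftrightarrow> \<gamma> = (A - lam)/d" using d unfolding d_def by (auto simp: field_simps)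
    have "inL A B C (v4 0 (lam + \<gamma>*b0) \<gamma> 1) \<longleftrightarrow> (\<gamma> = (A - lam)/d \<and> 0 = \<gamma>*A + C)"
      using e by (auto simp: inL_v4)
    also have "\<dots> \<longleftrightarrow> \<gamma> = (A - lam)/d \<and> Q"
    proof (cases "\<gamma> = (A - lam)/d")
      case True
      have "0 = \<gamma>*A + C \<longleftrightarrow> C = -(\<gamma>*A)" by (metis add.commute eq_neg_iff_add_eq_0)
      moreover have "-(\<gamma>*A) = A*(lam-A)/d"
      proof -
        have "-(\<gamma>*A) = -((A - lam)/d * A)" using True by simp
        also have "\<dots> = A*(lam-A)/d" using d by (simp add: field_simps)
        finally show ?thesis .
      qed
      ultimately show ?thesis unfolding Q_def using True by simp
    qed simp
    finally show "inL A B C (v4 0 (lam + \<gamma>*b0) \<gamma> 1) \<longleftrightarrow> \<gamma> = (A - lam)/d \<and> Q" .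
  qed
  have x: "\<not> inL A B C (v4 0 b0 1 0)" using False by (auto simp: inL_v4)
  have y: "\<not> inL A B C (v4 lam b0 1 0)" using False by (auto simp: inL_v4)
  show ?thesis unfolding s1 s2 using x y by simp
qed

lemma even_arith:
  fixes A B C :: "'a::{field,finite}"
  shows "(\<Sum>\<alpha>\<in>UNIV. ind (inL A B C (v4 \<alpha> 0 0 1)))
       + (\<Sum>b\<in>UNIV. ind (inL A B C (v4 0 b 1 0)))
       + ind (inL A B C (v4 0 0 1 0)) + ind (inL A B C (v4 0 0 1 0)) = 0"
proof -
  have s1: "(\<Sum>\<alpha>\<in>UNIV. ind (inL A B C (v4 \<alpha> 0 0 1))) = ind (A = 0)"
    by (rule sum_ind_unique[where g=C]) (auto simp: inL_v4)
  have s2: "(\<Sum>b\<in>UNIV. ind (inL A B C (v4 0 b 1 0))) = ind (A = 0)"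
    by (rule sum_ind_unique[where g=B]) (auto simp: inL_v4)
  show ?thesis unfolding s1 s2 by simp
qed

lemma functional_lin:
  "(\<Sum>i\<in>I. (\<Sum>g\<in>T. c g * g (\<phi> i))) + (\<Sum>i\<in>J. (\<Sum>g\<in>T. c g * g (\<psi> i)))
   + (\<Sum>g\<in>T. c g * g p) + (\<Sum>g\<in>T. c g * g q)
   = (\<Sum>g\<in>T. c g * ((\<Sum>i\<in>I. g (\<phi> i)) + (\<Sum>i\<in>J. g (\<psi> i)) + g p + (g q :: bit)))"
  by (simp only: sum_lin distrib_left sum.distrib)


lemma K_sub:
  fixes f :: "('a::{field,finite}^4) set \<Rightarrow> bit"
  assumes f: "f \<in> F2span (chi ` (L1::('a^4) set set))" and pf: "piP1 f = (\<lambda>_. 0)"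
  shows "f \<in> F2span (chi ` (X0::('a^4) set set))"
proof -
  have fP1: "\<And>w. w$3 \<noteq> 0 \<Longrightarrow> f (span1 w) = 0"
  proof -
    fix w :: "'a^4" assume "w$3 \<noteq> 0"
    hence "span1 w \<in> P1" unfolding P1_def by blast
    thus "f (span1 w) = 0" using fun_cong[OF pf, of "span1 w"] by (simp add: piP1_def)
  qed
  have fnp: "\<And>p. p \<notin> points \<Longrightarrow> f p = 0"
  proof -
    fix p :: "('a^4) set" assume p: "p \<notin> points"
    show "f p = 0" by (rule F2span_functional[OF f, where L="\<lambda>g. g p"]) (auto simp: chi_nonpoint[OF p])
  qed
  have fl0: "\<And>w. w \<noteq> 0 \<Longrightarrow> w$2 = 0 \<Longrightarrow> w$3 = 0 \<Longrightarrow> f (span1 w) = 0"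
  proof -
    fix w :: "'a^4" assume w: "w \<noteq> 0" "w$2 = 0" "w$3 = 0"
    show "f (span1 w) = 0"
    proof (rule F2span_functional[OF f, where L="\<lambda>g. g (span1 w)"])
      fix g assume "g \<in> chi ` (L1::('a^4) set set)"
      then obtain l where l: "l \<in> L1" "g = chi l" by blast
      have nw: "w \<notin> l" using L1_noint[OF l(1) _ w(2,3)] w(1) by blast
      have ll: "l \<in> lines" using l(1) by (simp add: L1_def)
      show "g (span1 w) = 0" using chi_span1[OF ll w(1)] nw l(2) by simp
    qed simp
  qed
  define F where "F b = f (span1 (v4 0 b 1 0))" for b
  have v4ne: "\<And>a b c. v4 a b c (1::'a) \<noteq> 0" "\<And>a b. v4 a b (1::'a) 0 \<noteq> 0" by (simp_all add: vec4_eq)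
  have const: "\<And>a b. f (span1 (v4 a b 1 0)) = F b"
  proof -
    fix a b :: 'a
    show "f (span1 (v4 a b 1 0)) = F b"
    proof (cases "a = 0")
      case True thus ?thesis by (simp add: F_def)
    next
      case False
      define L where "L g = (\<Sum>\<gamma>\<in>UNIV. g (span1 (v4 (\<gamma>*a) (\<gamma>*b) \<gamma> 1)))
          + (\<Sum>\<gamma>\<in>UNIV. g (span1 (v4 0 (a + \<gamma>*b) \<gamma> 1)))
          + g (span1 (v4 0 b 1 0)) + g (span1 (v4 a b 1 0))" for g :: "('a^4) set \<Rightarrow> bit"
      have "L f = 0"
      proof (rule F2span_functional[OF f])
        fix g assume "g \<in> chi ` (L1::('a^4) set set)"
        then obtain l where l: "l \<in> L1" "g = chi l" by blast
        obtain A B C where ABC: "\<forall>w. w \<noteq> 0 \<longrightarrow> chi l (span1 w) = ind (inL A B C w)"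
          using chi_L1[OF l(1)] by blast
        show "L g = 0" unfolding L_def l(2) using ABC v4ne key_arith[OF False, of A B C b] by simp
      next
        fix T c
        show "L (\<lambda>x. \<Sum>g\<in>T. c g * g x) = (\<Sum>g\<in>T. c g * L g)"
          unfolding L_def by (rule functional_lin)
      qed
      moreover have "(\<Sum>\<gamma>\<in>UNIV. f (span1 (v4 (\<gamma>*a) (\<gamma>*b) \<gamma> 1))) = 0" by (simp add: fP1)
      moreover have "(\<Sum>\<gamma>\<in>UNIV. f (span1 (v4 0 (a + \<gamma>*b) \<gamma> 1))) = 0" by (simp add: fP1)
      ultimately have "f (span1 (v4 0 b 1 0)) + f (span1 (v4 a b 1 0)) = 0" unfolding L_def by simp
      thus ?thesis unfolding F_def bit_add_eq0 by simp
    qed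
  qed
  have even: "(\<Sum>b\<in>UNIV. F b) = 0"
  proof -
    define L where "L g = (\<Sum>\<alpha>\<in>UNIV. g (span1 (v4 \<alpha> 0 0 1)))
          + (\<Sum>b\<in>UNIV. g (span1 (v4 0 b 1 0)))
          + g (span1 (v4 0 0 1 0)) + g (span1 (v4 0 0 1 0))" for g :: "('a^4) set \<Rightarrow> bit"
    have "L f = 0"
    proof (rule F2span_functional[OF f])
      fix g assume "g \<in> chi ` (L1::('a^4) set set)"
      then obtain l where l: "l \<in> L1" "g = chi l" by blast
      obtain A B C where ABC: "\<forall>w. w \<noteq> 0 \<longrightarrow> chi l (span1 w) = ind (inL A B C w)"
        using chi_L1[OF l(1)] by blast
      show "L g = 0" unfolding L_def l(2) using ABC v4ne even_arith[of A B C] by simp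
    next
      fix T c
      show "L (\<lambda>x. \<Sum>g\<in>T. c g * g x) = (\<Sum>g\<in>T. c g * L g)"
        unfolding L_def by (rule functional_lin)
    qed
    moreover have "(\<Sum>\<alpha>\<in>UNIV. f (span1 (v4 \<alpha> 0 0 1))) = 0" by (simp add: fP1)
    ultimately show ?thesis unfolding L_def F_def by simp
  qed
  define Bs where "Bs = {b. F b = 1}"
  have finBs: "finite Bs" by simp
  have card_Bs: "(\<Sum>b\<in>Bs. (1::bit)) = 0"
  proof -
    have "(\<Sum>b\<in>UNIV. F b) = (\<Sum>b\<in>UNIV. if b \<in> Bs then 1 else 0)"
      unfolding Bs_def by (intro sum.cong) simp_all
    also have "\<dots> = (\<Sum>b\<in>UNIV \<inter> Bs. 1)" by (rule sum.inter_restrict[symmetric]) simp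
    finally show ?thesis using even by simp
  qed
  have f_eq: "f = (\<lambda>x. \<Sum>b\<in>Bs. chi (mline b) x)"
  proof
    fix p
    show "f p = (\<Sum>b\<in>Bs. chi (mline b) p)"
    proof (cases "p \<in> points")
      case False thus ?thesis using fnp[OF False] chi_nonpoint[OF False] by simp
    next
      case True
      then obtain w :: "'a^4" where w: "w \<noteq> 0" "p = span1 w" unfolding points_def by blast
      have R: "(\<Sum>b\<in>Bs. chi (mline b) p) = (\<Sum>b\<in>Bs. ind (w$3 = 0 \<and> w$1 = b * w$2))"
        unfolding w(2) by (intro sum.cong refl chi_mline[OF w(1)])
      show ?thesis
      proof (cases "w$3 = 0")
        case False thus ?thesis unfolding R using fP1 w by simp
      next
        case w3: True
        show ?thesis
        proof (cases "w$2 = 0")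
          case True
          have "f p = 0" using fl0 w w3 True by simp
          moreover have "(\<Sum>b\<in>Bs. ind (w$3 = 0 \<and> w$1 = b * w$2)) = 0"
            using True w3 card_Bs by (cases "w$1 = 0") simp_all
          ultimately show ?thesis unfolding R by simp
        next
          case False
          have "(1 / w$2) *s w = v4 (w$0 / w$2) (w$1 / w$2) 1 0" using False w3 by (simp add: vec4_eq)
          hence "p = span1 (v4 (w$0 / w$2) (w$1 / w$2) 1 0)" using w(2) span1_scale[of "1 / w$2" w] False by simp
          hence fp: "f p = F (w$1 / w$2)" using const by simp
          have "(\<Sum>b\<in>Bs. ind (w$3 = 0 \<and> w$1 = b * w$2)) = (\<Sum>b\<in>Bs. if b = w$1 / w$2 then 1 else 0)"
            using w3 False by (intro sum.cong) (auto simp: field_simps)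
          also have "\<dots> = ind (w$1 / w$2 \<in> Bs)" by (simp add: sum.delta')
          also have "\<dots> = F (w$1 / w$2)" unfolding Bs_def by simp
          finally show ?thesis unfolding R fp by simp
        qed
      qed
    qed
  qed
  have "(\<lambda>x. \<Sum>b\<in>Bs. chi (mline b) x) \<in> F2span (chi ` X0)"
    by (rule F2span_sum[OF finBs]) (intro F2span_base imageI mline_X0)
  thus ?thesis using f_eq by simp
qed


theorem corollary14:
  fixes t :: nat and Z :: "(('a::{field,finite} ^ 4) set \<Rightarrow> bit) set"
  assumes "CARD('a) = 2 ^ t"
    and "Z \<subseteq> chi ` (L1 :: ('a ^ 4) set set)"
    and "inj_on piP1 Z"
    and "F2basis (piP1 ` Z) (CP1L1 :: (('a ^ 4) set \<Rightarrow> bit) set)"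
  shows "F2span (chi ` (X0 :: ('a ^ 4) set set) \<union> Z) = F2span (chi ` (X0 \<union> L1))"
proof
  show "F2span (chi ` X0 \<union> Z) \<subseteq> F2span (chi ` (X0 \<union> L1))"
    using assms(2) by (intro F2span_mono) auto
next
  show "F2span (chi ` (X0 \<union> L1)) \<subseteq> F2span (chi ` X0 \<union> Z)"
  proof (rule F2span_subspan, rule subsetI)
    fix g assume "g \<in> chi ` ((X0::('a^4) set set) \<union> L1)"
    then obtain l where l: "l \<in> X0 \<union> L1" "g = chi l" by blast
    show "g \<in> F2span (chi ` X0 \<union> Z)"
    proof (cases "l \<in> X0")
      case True thus ?thesis using l by (intro F2span_base) auto
    next
      case False
      hence lL1: "l \<in> L1" using l by blast
      have basis: "F2span (piP1 ` Z) = CP1L1" using assms(4) unfolding F2basis_def by blast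
      have "piP1 (chi l) \<in> CP1L1" unfolding CP1L1_def using lL1 by (intro imageI F2span_base) auto
      hence "piP1 (chi l) \<in> F2span (piP1 ` Z)" using basis by simp
      then obtain T' c where T': "finite T'" "T' \<subseteq> piP1 ` Z" "piP1 (chi l) = (\<lambda>x. \<Sum>h\<in>T'. c h * h x)"
        unfolding F2span_def by blast
      define T where "T = {z \<in> Z. piP1 z \<in> T'}"
      have TZ: "T \<subseteq> Z" unfolding T_def by blast
      have injT: "inj_on piP1 T" using assms(3) TZ inj_on_subset by blast
      have imT: "piP1 ` T = T'" using T'(2) unfolding T_def by blast
      have finT: "finite T" using finite_imageD[of piP1 T] imT T'(1) injT by simp
      define z0 where "z0 = (\<lambda>x. \<Sum>z\<in>T. c (piP1 z) * z x)"
      have z0Z: "z0 \<in> F2span Z" unfolding z0_def using finT TZ by (intro F2spanI[where c="\<lambda>z. c (piP1 z)"]) auto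
      have piz0: "piP1 z0 = piP1 (chi l)"
      proof
        fix x
        have "piP1 z0 x = (\<Sum>z\<in>T. c (piP1 z) * piP1 z x)" unfolding z0_def piP1_def by simp
        also have "\<dots> = (\<Sum>h\<in>piP1 ` T. c h * h x)" using sum.reindex[OF injT, of "\<lambda>h. c h * h x"] by simp
        also have "\<dots> = piP1 (chi l) x" using T'(3) imT by simp
        finally show "piP1 z0 x = piP1 (chi l) x" .
      qed
      define f where "f = (\<lambda>x. chi l x + z0 x)"
      have "z0 \<in> F2span (chi ` L1)" using z0Z F2span_mono[OF assms(2)] by blast
      moreover have "chi l \<in> F2span (chi ` L1)" using lL1 by (intro F2span_base) auto
      ultimately have fL1: "f \<in> F2span (chi ` L1)" unfolding f_def by (intro F2span_add)
      have pf: "piP1 f = (\<lambda>_. 0)"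
      proof
        fix x
        have "(if x \<in> P1 then z0 x else 0) = (if x \<in> P1 then chi l x else 0)"
          using fun_cong[OF piz0, of x] by (simp add: piP1_def)
        thus "piP1 f x = 0" unfolding piP1_def f_def by (cases "x \<in> P1") simp_all
      qed
      have "f \<in> F2span (chi ` X0)" by (rule K_sub[OF fL1 pf])
      hence fS: "f \<in> F2span (chi ` X0 \<union> Z)" using F2span_mono[of "chi ` X0" "chi ` X0 \<union> Z"] by blast
      have z0S: "z0 \<in> F2span (chi ` X0 \<union> Z)" using z0Z F2span_mono[of Z "chi ` X0 \<union> Z"] by blast
      have "g = (\<lambda>x. f x + z0 x)" using l(2) by (simp add: f_def fun_eq_iff add.assoc)
      thus ?thesis using F2span_add[OF fS z0S] by simp
    qed
  qed
qed

end
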